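(* Let $k\ge 3$ and let $G=(V,E)$ be a $k$-uniform hyperstar of size $d\ge 2$, with $V=[n]$, $E=\{e_1,\ldots,e_d\}$, and heart the vertex $1$. Let $\mathcal L$ be its Laplacian tensor. Then a nonzero vector $\mathbf x\in\mathbb R^n$ is an H-eigenvector of $\mathcal L$ corresponding to the H-eigenvalue $1$ if and only if $x_1=0$ and $\sum_{i=1}^d\prod_{s\in e_i\setminus\{1\}}x_s=0$.
   Context: A $k$-uniform hyperstar of size $d$ is a hypergraph whose vertex set is a disjoint union $V=V_0\cup V_1\cup\cdots\cup V_d$ with $|V_0|=1$, $|V_1|=\cdots=|V_d|=k-1$, and edge set $\{V_0\cup V_i: i\in[d]\}$; the vertex in $V_0$ is the heart. For a $k$-uniform hypergraph with $d_i$ the number of edges containing $i$, the Laplacian tensor $\mathcal L=\mathcal D-\mathcal A$ ($\mathcal D$ diagonal with entries $d_i$, $\mathcal A$ with entries $\frac1{(k-1)!}$ at index tuples forming an edge and $0$ otherwise) satisfies $(\mathcal L\mathbf x^{k-1})_i=d_ix_i^{k-1}-\sum_{e\in E,\,i\in e}\prod_{s\in e\setminus\{i\}}x_s$. A nonzero $\mathbf x$ is an H-eigenvector for the H-eigenvalue $\lambda$ if $(\mathcal L\mathbf x^{k-1})_i=\lambda x_i^{k-1}$ for all $i\in[n]$. *)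

theory Defs
  imports "HOL-Analysis.Analysis"
begin

text \<open>Hypergraphs: a vertex set V (a finite set of naturals) and an edge set E (a set of subsets of V).
  Real vectors on V = {1..n} are functions nat => real (values outside V are irrelevant).\<close>

definition is_hyperstar :: "nat \<Rightarrow> nat \<Rightarrow> nat set \<Rightarrow> nat \<Rightarrow> nat set set \<Rightarrow> bool" where
  "is_hyperstar k d V h E \<longleftrightarrow>
     (\<exists>W :: nat \<Rightarrow> nat set.
        (\<forall>i\<in>{1..d}. finite (W i) \<and> card (W i) = k - 1 \<and> h \<notin> W i) \<and>
        (\<forall>i\<in>{1..d}. \<forall>j\<in>{1..d}. i \<noteq> j \<longrightarrow> W i \<inter> W j = {}) \<and>
        V = insert h (\<Union>i\<in>{1..d}. W i) \<and>
        E = (\<lambda>i. insert h (W i)) ` {1..d})"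

definition hdeg :: "nat set set \<Rightarrow> nat \<Rightarrow> nat" where
  "hdeg E i = card {e\<in>E. i \<in> e}"

text \<open>(L x^{k-1})_i = d_i x_i^{k-1} - sum over edges e containing i of prod_{s in e - {i}} x_s.\<close>
definition lap_apply :: "nat \<Rightarrow> nat set set \<Rightarrow> (nat \<Rightarrow> real) \<Rightarrow> nat \<Rightarrow> real" where
  "lap_apply k E x i = real (hdeg E i) * x i ^ (k - 1) - (\<Sum>e\<in>{e\<in>E. i \<in> e}. \<Prod>s\<in>e - {i}. x s)"

definition lap_H_eigenvector :: "nat \<Rightarrow> nat set \<Rightarrow> nat set set \<Rightarrow> real \<Rightarrow> (nat \<Rightarrow> real) \<Rightarrow> bool" where
  "lap_H_eigenvector k V E lam x \<longleftrightarrow>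
     (\<exists>i\<in>V. x i \<noteq> 0) \<and> (\<forall>i\<in>V. lap_apply k E x i = lam * x i ^ (k - 1))"

end

theory Submission
  imports Defs
begin

theorem proposition5p3:
  fixes k d n :: nat and E :: "nat set set" and e :: "nat \<Rightarrow> nat set" and x :: "nat \<Rightarrow> real"
  assumes "k \<ge> 3" and "d \<ge> 2"
    and "is_hyperstar k d {1..n} 1 E"
    and "bij_betw e {1..d} E"
    and "\<exists>i\<in>{1..n}. x i \<noteq> 0"
  shows "lap_H_eigenvector k {1..n} E 1 x \<longleftrightarrow>
           x 1 = 0 \<and> (\<Sum>i=1..d. \<Prod>s\<in>e i - {1}. x s) = 0"
proof -
  obtain W where W1: "\<forall>i\<in>{1..d}. finite (W i) \<and> card (W i) = k - 1 \<and> 1 \<notin> W i"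
    and W2: "\<forall>i\<in>{1..d}. \<forall>j\<in>{1..d}. i \<noteq> j \<longrightarrow> W i \<inter> W j = {}"
    and W3: "{1..n} = insert 1 (\<Union>i\<in>{1..d}. W i)"
    and W4: "E = (\<lambda>i. insert 1 (W i)) ` {1..d}"
    using assms(3) unfolding is_hyperstar_def by blast
  have cardE: "card E = d" using bij_betw_same_card[OF assms(4)] by simp
  have finE: "finite E" using W4 by simp
  have S: "(\<Sum>i=1..d. \<Prod>s\<in>e i - {1}. x s) = (\<Sum>f\<in>E. \<Prod>s\<in>f - {1}. x s)"
    using sum.reindex_bij_betw[OF assms(4), of "\<lambda>f. \<Prod>s\<in>f - {1}. x s"] by simp
  define T where "T = (\<Sum>f\<in>E. \<Prod>s\<in>f - {1}. x s)"
  have one: "(1::nat) \<in> {1..n}" by (simp only: W3) blast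
  have heart: "lap_apply k E x 1 = real d * x 1 ^ (k-1) - T"
  proof -
    have "{f\<in>E. 1 \<in> f} = E" using W4 by auto
    thus ?thesis unfolding lap_apply_def hdeg_def T_def using cardE by simp
  qed
  have nonheart: "lap_apply k E x v = x v ^ (k-1) - x 1 * (\<Prod>s\<in>W j - {v}. x s)"
    if j: "j \<in> {1..d}" and v: "v \<in> W j" for j v
  proof -
    have uniq: "f = insert 1 (W j)" if "f \<in> E" "v \<in> f" for f
    proof -
      obtain i where i: "i \<in> {1..d}" "f = insert 1 (W i)" using W4 \<open>f \<in> E\<close> by auto
      have "v \<noteq> 1" using W1 j v by auto
      hence "v \<in> W i" using i \<open>v \<in> f\<close> by auto
      hence "i = j" using W2 i j v by blast
      thus "f = insert 1 (W j)" using i by simp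
    qed
    have inE: "insert 1 (W j) \<in> E" using W4 j by auto
    have "{f\<in>E. v \<in> f} = {insert 1 (W j)}"
      using uniq inE v by blast
    moreover have "insert 1 (W j) - {v} = insert 1 (W j - {v})" using W1 j v by auto
    moreover have "(\<Prod>s\<in>insert 1 (W j - {v}). x s) = x 1 * (\<Prod>s\<in>W j - {v}. x s)"
      using W1 j by (subst prod.insert) auto
    ultimately show ?thesis unfolding lap_apply_def hdeg_def by simp
  qed
  show ?thesis
  proof
    assume H: "lap_H_eigenvector k {1..n} E 1 x"
    hence eq: "\<And>i. i \<in> {1..n} \<Longrightarrow> lap_apply k E x i = x i ^ (k-1)"
      unfolding lap_H_eigenvector_def by simp
    have x1: "x 1 = 0"
    proof (rule ccontr)
      assume nz: "x 1 \<noteq> 0"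
      have "\<forall>f\<in>E. (\<Prod>s\<in>f - {1}. x s) = 0"
      proof
        fix f assume "f \<in> E"
        then obtain j where j: "j \<in> {1..d}" "f = insert 1 (W j)" using W4 by auto
        have fin: "finite (W j)" and c: "card (W j) = k - 1" and n1: "1 \<notin> W j" using W1 j by auto
        have "W j \<noteq> {}" using c assms(1) by auto
        then obtain v where v: "v \<in> W j" by auto
        have "v \<in> insert 1 (\<Union>i\<in>{1..d}. W i)" using j v by blast
        hence "v \<in> {1..n}" by (simp only: W3)
        hence "x 1 * (\<Prod>s\<in>W j - {v}. x s) = 0" using eq nonheart[OF j(1) v] by simp
        hence p: "(\<Prod>s\<in>W j - {v}. x s) = 0" using nz by simp
        have "(\<Prod>s\<in>W j. x s) = x v * (\<Prod>s\<in>W j - {v}. x s)"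
          using prod.remove[OF fin v] by simp
        also have "\<dots> = 0" using p by simp
        finally show "(\<Prod>s\<in>f - {1}. x s) = 0" using j n1 by simp
      qed
      hence "T = 0" unfolding T_def by simp
      hence "real d * x 1 ^ (k-1) = x 1 ^ (k-1)" using eq[OF one] heart by simp
      hence "(real d - 1) * x 1 ^ (k-1) = 0" by (simp add: algebra_simps)
      moreover have "real d - 1 \<noteq> 0" using assms(2) by simp
      ultimately show False using nz by simp
    qed
    obtain m where km: "k = Suc (Suc (Suc m))" using assms(1) using le_Suc_ex[of 3 k] by auto
    have "T = 0" using eq[OF one] heart x1 km by simp
    thus "x 1 = 0 \<and> (\<Sum>i=1..d. \<Prod>s\<in>e i - {1}. x s) = 0" using x1 S T_def by simp
  next
    assume R: "x 1 = 0 \<and> (\<Sum>i=1..d. \<Prod>s\<in>e i - {1}. x s) = 0"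
    have T0: "T = 0" using R S T_def by simp
    show "lap_H_eigenvector k {1..n} E 1 x"
      unfolding lap_H_eigenvector_def
    proof (intro conjI ballI)
      show "\<exists>i\<in>{1..n}. x i \<noteq> 0" by fact
      fix i assume i: "i \<in> {1..n}"
      show "lap_apply k E x i = 1 * x i ^ (k-1)"
      proof (cases "i = 1")
        case True
        obtain m where km: "k = Suc (Suc (Suc m))" using assms(1) using le_Suc_ex[of 3 k] by auto
        thus ?thesis using True heart T0 R by simp
      next
        case False
        then obtain j where "j \<in> {1..d}" "i \<in> W j"
          using i False unfolding W3 by blast
        thus ?thesis using nonheart R by simp
      qed
    qed
  qed
qed

end
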